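(* Let $n\ge 3$ and let $\{\mathcal{G}_k\}_{k\ge0}$ be any sequence of digraphs on $\mathcal{V}=\{1,\dots,n\}$. For every algorithm in the class $\mathcal{A}_{\rm ave}$ (i.e. every choice of parameters with $\eta_k\in(0,1]$ and $\alpha_k\in[0,1-\eta_k]$ for all $k$), every initial time $k_0\ge 0$ and every initial value $x^0\in\mathbb{R}^n$ not lying on the consensus manifold $\mathrm{C}=\{x\in\mathbb{R}^n: x_1=\dots=x_n\}$, finite-time consensus is not achieved: for every $T\ge k_0$ the states $x_1(T),\dots,x_n(T)$ are not all equal.
   Context: Network of nodes $\mathcal{V}=\{1,\dots,n\}$, discrete time $k=0,1,2,\dots$, state $x_i(k)\in\mathbb{R}$ of node $i$, $x(k)=(x_1(k),\dots,x_n(k))^T$. At each time $k$ a digraph $\mathcal{G}_k=(\mathcal{V},\mathcal{E}_k)$ is given; node $j$ is a neighbor of node $i$ at time $k$ if $(j,i)\in\mathcal{E}_k$, and every node is always a neighbor of itself; $\mathcal{N}_i(k)$ denotes the neighbor set of $i$ at time $k$. The algorithm is $$x_i(k+1)=\eta_k x_i(k)+\alpha_k\min_{j\in\mathcal{N}_i(k)}x_j(k)+(1-\eta_k-\alpha_k)\max_{j\in\mathcal{N}_i(k)}x_j(k),\quad i=1,\dots,n,$$ where $\{\eta_k\},\{\alpha_k\}$ are given real sequences (the same for all nodes) with $\eta_k\ge0,\alpha_k\ge0,\alpha_k+\eta_k\le1$. The class $\mathcal{A}_{\rm ave}$ consists of those algorithms with $\eta_k\in(0,1]$, $\alpha_k\in[0,1-\eta_k]$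 for all $k$. The iteration is started at an initial time $k_0\ge0$ with $x(k_0)=x^0$. Finite-time consensus for $x^0$ means there exist $z_*\in\mathbb{R}$ and an integer $T_*$ with $x_i(T_* )=z_*$ for all $i$. *)

theory Defs
  imports Complex_Main
begin

text \<open>Nodes are 0,...,n-1 (standing for 1,...,n). A time-varying digraph is
  E :: nat => (nat * nat) set; (j,i) in E k means j is a neighbor of i at time k.
  Every node is always its own neighbor.\<close>

definition nbrs :: "nat \<Rightarrow> (nat \<Rightarrow> (nat \<times> nat) set) \<Rightarrow> nat \<Rightarrow> nat \<Rightarrow> nat set" where
  "nbrs n E k i = insert i {j. j < n \<and> (j, i) \<in> E k}"

definition in_A_ave :: "(nat \<Rightarrow> real) \<Rightarrow> (nat \<Rightarrow> real) \<Rightarrow> bool" where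
  "in_A_ave eta alpha \<longleftrightarrow> (\<forall>k. 0 < eta k \<and> eta k \<le> 1 \<and> 0 \<le> alpha k \<and> alpha k \<le> 1 - eta k)"

definition is_traj ::
  "nat \<Rightarrow> (nat \<Rightarrow> (nat \<times> nat) set) \<Rightarrow> (nat \<Rightarrow> real) \<Rightarrow> (nat \<Rightarrow> real) \<Rightarrow> nat \<Rightarrow> (nat \<Rightarrow> real)
    \<Rightarrow> (nat \<Rightarrow> nat \<Rightarrow> real) \<Rightarrow> bool" where
  "is_traj n E eta alpha k0 x0 x \<longleftrightarrow>
     (\<forall>i<n. x k0 i = x0 i) \<and>
     (\<forall>k\<ge>k0. \<forall>i<n. x (Suc k) i =
         eta k * x k i + alpha k * Min (x k ` nbrs n E k i)
         + (1 - eta k - alpha k) * Max (x k ` nbrs n E k i))"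

end

theory Submission
  imports Defs
begin

lemma nbrs_sub: "i < n \<Longrightarrow> nbrs n E k i \<subseteq> {..<n}"
  unfolding nbrs_def by auto

lemma nbrs_fin: "finite (nbrs n E k i)"
  unfolding nbrs_def by auto

lemma step_noncons:
  fixes x :: "nat \<Rightarrow> nat \<Rightarrow> real"
  assumes A: "in_A_ave eta alpha"
    and nc: "\<exists>i<n. \<exists>j<n. x k i \<noteq> x k j"
    and st: "\<forall>i<n. x (Suc k) i =
         eta k * x k i + alpha k * Min (x k ` nbrs n E k i)
         + (1 - eta k - alpha k) * Max (x k ` nbrs n E k i)"
  shows "\<exists>i<n. \<exists>j<n. x (Suc k) i \<noteq> x (Suc k) j"
proof -
  define S where "S = {..<n::nat}"
  from nc have ne: "S \<noteq> {}" unfolding S_def by auto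
  have fS: "finite S" unfolding S_def by auto
  define Mx where "Mx = Max (x k ` S)"
  define mx where "mx = Min (x k ` S)"
  have "Mx \<in> x k ` S" unfolding Mx_def using fS ne by (intro Max_in) auto
  then obtain i where i: "i < n" "x k i = Mx" unfolding S_def by auto
  have "mx \<in> x k ` S" unfolding mx_def using fS ne by (intro Min_in) auto
  then obtain j where j: "j < n" "x k j = mx" unfolding S_def by auto
  have bnd: "\<And>l. l < n \<Longrightarrow> mx \<le> x k l \<and> x k l \<le> Mx"
    unfolding mx_def Mx_def S_def by auto
  have lt: "mx < Mx"
  proof -
    from nc obtain a b where "a < n" "b < n" "x k a \<noteq> x k b" by auto
    thus ?thesis using bnd[of a] bnd[of b] by linarith
  qed
  have insi: "i \<in> nbrs n E k i" and insj: "j \<in> nbrs n E k j" unfolding nbrs_def by auto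
  have Mi: "Max (x k ` nbrs n E k i) = Mx"
  proof (rule antisym)
    show "Max (x k ` nbrs n E k i) \<le> Mx"
      using nbrs_sub[OF i(1)] bnd nbrs_fin insi by (subst Max_le_iff) auto
    show "Mx \<le> Max (x k ` nbrs n E k i)"
      using i(2) insi nbrs_fin by (subst Max_ge_iff) auto
  qed
  have mi: "mx \<le> Min (x k ` nbrs n E k i)"
    using nbrs_sub[OF i(1)] bnd nbrs_fin insi by (subst Min_ge_iff) auto
  have mj: "Min (x k ` nbrs n E k j) = mx"
  proof (rule antisym)
    show "mx \<le> Min (x k ` nbrs n E k j)"
      using nbrs_sub[OF j(1)] bnd nbrs_fin insj by (subst Min_ge_iff) auto
    show "Min (x k ` nbrs n E k j) \<le> mx"
      using j(2) insj nbrs_fin by (subst Min_le_iff) auto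
  qed
  have Mj: "Max (x k ` nbrs n E k j) \<le> Mx"
    using nbrs_sub[OF j(1)] bnd nbrs_fin insj by (subst Max_le_iff) auto
  from A have e: "0 < eta k" "0 \<le> alpha k" "0 \<le> 1 - eta k - alpha k"
    unfolding in_A_ave_def by auto
  have p1: "alpha k * mx \<le> alpha k * Min (x k ` nbrs n E k i)"
    using mult_left_mono[OF mi e(2)] .
  have p2: "(1 - eta k - alpha k) * Max (x k ` nbrs n E k j) \<le> (1 - eta k - alpha k) * Mx"
    using mult_left_mono[OF Mj e(3)] .
  have p3: "eta k * mx < eta k * Mx" using mult_strict_left_mono[OF lt e(1)] .
  have "x (Suc k) j < x (Suc k) i"
    using st i j Mi mj p1 p2 p3 by simp
  thus ?thesis using i j by force
qed

theorem theorem1: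
  fixes n :: nat and E :: "nat \<Rightarrow> (nat \<times> nat) set"
    and eta alpha :: "nat \<Rightarrow> real" and k0 :: nat
    and x0 :: "nat \<Rightarrow> real" and x :: "nat \<Rightarrow> nat \<Rightarrow> real"
  assumes "n \<ge> 3"
    and "in_A_ave eta alpha"
    and "\<exists>i<n. \<exists>j<n. x0 i \<noteq> x0 j"
    and "is_traj n E eta alpha k0 x0 x"
  shows "\<forall>T\<ge>k0. \<not> (\<forall>i<n. \<forall>j<n. x T i = x T j)"
proof (intro allI impI)
  fix T assume "k0 \<le> T"
  then have "\<exists>i<n. \<exists>j<n. x T i \<noteq> x T j"
  proof (induction T rule: dec_induct)
    case base
    from assms(3) obtain i j where "i<n" "j<n" "x0 i \<noteq> x0 j" by auto
    then show ?case using assms(4) unfolding is_traj_def by metis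
  next
    case (step k)
    have "\<forall>i<n. x (Suc k) i =
         eta k * x k i + alpha k * Min (x k ` nbrs n E k i)
         + (1 - eta k - alpha k) * Max (x k ` nbrs n E k i)"
      using assms(4) step.hyps unfolding is_traj_def by auto
    then show ?case using step_noncons[where x=x and k=k, OF assms(2) step.IH] by blast
  qed
  then show "\<not> (\<forall>i<n. \<forall>j<n. x T i = x T j)" by auto
qed

end
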